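(* Let $(R,\alpha)$ be a multiplicative Hom-Lie conformal algebra with $\alpha$ surjective and $Z(R)=0$. Then $\mathrm{QC}(R)$ is a Hom-Lie conformal algebra (with the bracket $[D_\mu H]_\theta(a)=D_\mu(H_{\theta-\mu}a)-H_{\theta-\mu}(D_\mu a)$, in particular closed under it: $[\mathrm{QC}_{\alpha^k}(R)_\mu\mathrm{QC}_{\alpha^s}(R)]\subseteq\mathrm{QC}_{\alpha^{k+s}}(R)[\mu]$) if and only if $[\mathrm{QC}(R)_\lambda\mathrm{QC}(R)]=0$.
   Context: Hom-Lie conformal algebra $(R,\alpha)$: $\mathbb{C}[\partial]$-module $R$, $\mathbb{C}$-linear $\alpha$ with $\alpha\partial=\partial\alpha$, bilinear $\lambda$-bracket $R\otimes R\to R[\lambda]$ with $[\partial a_\lambda b]=-\lambda[a_\lambda b]$, $[a_\lambda\partial b]=(\partial+\lambda)[a_\lambda b]$, $[a_\lambda b]=-[b_{-\partial-\lambda}a]$, $[\alpha(a)_\lambda[b_\mu c]]=[[a_\lambda b]_{\lambda+\mu}\alpha(c)]+[\alpha(b)_\mu[a_\lambda c]]$; multiplicative: $\alpha([a_\lambda b])=[\alpha(a)_\lambda\alpha(b)]$. Center $Z(R)=\{a:[a_\lambda b]=0\ \forall b\}$. $\mathrm{Cend}(R)$ is the set of $\mathbb{C}$-linear $D:R\to R[\mu]$ with $D_\mu(\partial a)=(\partial+\mu)D_\mu(a)$, and $\Omega=\{D\in\mathrm{Cend}(R): D_\mu\alpha=\alpha D_\mu\}$. $D\in\Omega$ is an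 $\alpha^k$-quasicentroid if $[(D_\mu a)_{\lambda+\mu}\alpha^k(b)]=[\alpha^k(a)_\lambda D_\mu(b)]$ for all $a,b\in R$; $\mathrm{QC}_{\alpha^k}(R)$ is the set of these and $\mathrm{QC}(R)=\bigoplus_{k\ge0}\mathrm{QC}_{\alpha^k}(R)$. *)

theory Defs
  imports Complex_Main "HOL-Library.Function_Algebras"
begin

text \<open>A C[d]-module is a type 'v with addition, a complex scalar
action sc and a C-linear operator d (the action of the indeterminate).
A lambda-bracket with values in R[lambda] is represented pointwise as a function
br :: complex => 'v => 'v => 'v (br l a b = [a_l b]) which is required to be
polynomial in l.  Everything is stated relative to a carrier set A, so that the
same definition applies both to R (carrier UNIV) and to QC(R).\<close>

definition is_cpoly_on :: "'v set \<Rightarrow> (complex \<Rightarrow> 'v \<Rightarrow> 'v) \<Rightarrow> (complex \<Rightarrow> 'v::ab_group_add) \<Rightarrow> bool" where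
  "is_cpoly_on A sc f \<longleftrightarrow>
     (\<exists>n c. (\<forall>j<n. c j \<in> A) \<and> (\<forall>z. f z = (\<Sum>j<n. sc (z ^ j) (c j))))"

text \<open>[b_{-d-l} a] for [b_l a] = sum_j l^j c_j is  sum_j (-d-l)^j c_j
  = sum_j (-1)^j sum_{i<=j} binom(j,i) l^i d^(j-i) c_j.\<close>
definition subst_minus_d :: "(complex \<Rightarrow> 'v \<Rightarrow> 'v) \<Rightarrow> ('v \<Rightarrow> 'v) \<Rightarrow> nat \<Rightarrow> (nat \<Rightarrow> 'v) \<Rightarrow> complex \<Rightarrow> 'v::ab_group_add" where
  "subst_minus_d sc d n c l =
     (\<Sum>j<n. \<Sum>i\<le>j. sc ((-1) ^ j * of_nat (j choose i) * l ^ i) ((d ^^ (j - i)) (c j)))"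

definition hom_lie_conf_on ::
  "'v set \<Rightarrow> (complex \<Rightarrow> 'v \<Rightarrow> 'v) \<Rightarrow> ('v \<Rightarrow> 'v) \<Rightarrow> ('v \<Rightarrow> 'v) \<Rightarrow> (complex \<Rightarrow> 'v \<Rightarrow> 'v \<Rightarrow> 'v::ab_group_add) \<Rightarrow> bool" where
  "hom_lie_conf_on A sc d alpha br \<longleftrightarrow>
     \<comment> \<open>A is a C[d]-submodule (closed under the operations), alpha and br preserve A\<close>
     0 \<in> A \<and>
     (\<forall>a\<in>A. \<forall>b\<in>A. a + b \<in> A) \<and>
     (\<forall>x. \<forall>a\<in>A. sc x a \<in> A) \<and>
     (\<forall>a\<in>A. d a \<in> A) \<and>
     (\<forall>a\<in>A. alpha a \<in> A) \<and>
     (\<forall>l. \<forall>a\<in>A. \<forall>b\<in>A. br l a b \<in> A) \<and>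
     \<comment> \<open>complex vector space axioms\<close>
     (\<forall>a\<in>A. sc 1 a = a) \<and>
     (\<forall>x y. \<forall>a\<in>A. sc (x * y) a = sc x (sc y a)) \<and>
     (\<forall>x y. \<forall>a\<in>A. sc (x + y) a = sc x a + sc y a) \<and>
     (\<forall>x. \<forall>a\<in>A. \<forall>b\<in>A. sc x (a + b) = sc x a + sc x b) \<and>
     \<comment> \<open>d and alpha are C-linear, alpha commutes with d\<close>
     (\<forall>a\<in>A. \<forall>b\<in>A. d (a + b) = d a + d b) \<and>
     (\<forall>x. \<forall>a\<in>A. d (sc x a) = sc x (d a)) \<and>
     (\<forall>a\<in>A. \<forall>b\<in>A. alpha (a + b) = alpha a + alpha b) \<and>
     (\<forall>x. \<forall>a\<in>A. alpha (sc x a) = sc x (alpha a)) \<and>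
     (\<forall>a\<in>A. alpha (d a) = d (alpha a)) \<and>
     \<comment> \<open>the bracket is C-bilinear and takes values in A[l]\<close>
     (\<forall>l. \<forall>a\<in>A. \<forall>b\<in>A. \<forall>c\<in>A. br l (a + b) c = br l a c + br l b c) \<and>
     (\<forall>l. \<forall>a\<in>A. \<forall>b\<in>A. \<forall>c\<in>A. br l a (b + c) = br l a b + br l a c) \<and>
     (\<forall>l x. \<forall>a\<in>A. \<forall>b\<in>A. br l (sc x a) b = sc x (br l a b)) \<and>
     (\<forall>l x. \<forall>a\<in>A. \<forall>b\<in>A. br l a (sc x b) = sc x (br l a b)) \<and>
     (\<forall>a\<in>A. \<forall>b\<in>A. is_cpoly_on A sc (\<lambda>l. br l a b)) \<and>
     \<comment> \<open>conformal sesquilinearity\<close>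
     (\<forall>l. \<forall>a\<in>A. \<forall>b\<in>A. br l (d a) b = sc (- l) (br l a b)) \<and>
     (\<forall>l. \<forall>a\<in>A. \<forall>b\<in>A. br l a (d b) = d (br l a b) + sc l (br l a b)) \<and>
     \<comment> \<open>skew-symmetry [a_l b] = - [b_{-d-l} a]\<close>
     (\<forall>a\<in>A. \<forall>b\<in>A. \<exists>n c. (\<forall>j<n. c j \<in> A) \<and>
        (\<forall>l. br l b a = (\<Sum>j<n. sc (l ^ j) (c j))) \<and>
        (\<forall>l. br l a b = - subst_minus_d sc d n c l)) \<and>
     \<comment> \<open>Hom-Jacobi identity\<close>
     (\<forall>l m. \<forall>a\<in>A. \<forall>b\<in>A. \<forall>c\<in>A.
        br l (alpha a) (br m b c) = br (l + m) (br l a b) (alpha c) + br m (alpha b) (br l a c))"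

definition multiplicative :: "('v \<Rightarrow> 'v) \<Rightarrow> (complex \<Rightarrow> 'v \<Rightarrow> 'v \<Rightarrow> 'v) \<Rightarrow> bool" where
  "multiplicative alpha br \<longleftrightarrow> (\<forall>l a b. alpha (br l a b) = br l (alpha a) (alpha b))"

definition center :: "(complex \<Rightarrow> 'v \<Rightarrow> 'v \<Rightarrow> 'v::zero) \<Rightarrow> 'v set" where
  "center br = {a. \<forall>b l. br l a b = 0}"

text \<open>Conformal endomorphisms D : R -> R[m], represented pointwise (D m a = D_m(a)).\<close>
definition Cend :: "(complex \<Rightarrow> 'v \<Rightarrow> 'v) \<Rightarrow> ('v \<Rightarrow> 'v) \<Rightarrow> (complex \<Rightarrow> 'v \<Rightarrow> 'v::ab_group_add) set" where
  "Cend sc d = {D.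
     (\<forall>m a b. D m (a + b) = D m a + D m b) \<and>
     (\<forall>m x a. D m (sc x a) = sc x (D m a)) \<and>
     (\<forall>a. is_cpoly_on UNIV sc (\<lambda>m. D m a)) \<and>
     (\<forall>m a. D m (d a) = d (D m a) + sc m (D m a))}"

definition Omega :: "(complex \<Rightarrow> 'v \<Rightarrow> 'v) \<Rightarrow> ('v \<Rightarrow> 'v) \<Rightarrow> ('v \<Rightarrow> 'v) \<Rightarrow> (complex \<Rightarrow> 'v \<Rightarrow> 'v::ab_group_add) set" where
  "Omega sc d alpha = {D \<in> Cend sc d. \<forall>m a. D m (alpha a) = alpha (D m a)}"

definition QCk :: "(complex \<Rightarrow> 'v \<Rightarrow> 'v) \<Rightarrow> ('v \<Rightarrow> 'v) \<Rightarrow> ('v \<Rightarrow> 'v) \<Rightarrow> (complex \<Rightarrow> 'v \<Rightarrow> 'v \<Rightarrow> 'v) \<Rightarrow> nat \<Rightarrow> (complex \<Rightarrow> 'v \<Rightarrow> 'v::ab_group_add) set" where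
  "QCk sc d alpha br k = {D \<in> Omega sc d alpha.
     \<forall>a b l m. br (l + m) (D m a) ((alpha ^^ k) b) = br l ((alpha ^^ k) a) (D m b)}"

text \<open>QC(R) = sum over k of QC_{alpha^k}(R), as the set of finite sums of homogeneous elements.\<close>
definition QC :: "(complex \<Rightarrow> 'v \<Rightarrow> 'v) \<Rightarrow> ('v \<Rightarrow> 'v) \<Rightarrow> ('v \<Rightarrow> 'v) \<Rightarrow> (complex \<Rightarrow> 'v \<Rightarrow> 'v \<Rightarrow> 'v) \<Rightarrow> (complex \<Rightarrow> 'v \<Rightarrow> 'v::ab_group_add) set" where
  "QC sc d alpha br = {(\<Sum>k<n. f k) | n f. \<forall>k<n. f k \<in> QCk sc d alpha br k}"

definition cend_sc :: "(complex \<Rightarrow> 'v \<Rightarrow> 'v) \<Rightarrow> complex \<Rightarrow> (complex \<Rightarrow> 'v \<Rightarrow> 'v) \<Rightarrow> (complex \<Rightarrow> 'v \<Rightarrow> 'v)" where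
  "cend_sc sc x D = (\<lambda>m a. sc x (D m a))"

definition cend_d :: "(complex \<Rightarrow> 'v \<Rightarrow> 'v) \<Rightarrow> (complex \<Rightarrow> 'v \<Rightarrow> 'v) \<Rightarrow> (complex \<Rightarrow> 'v \<Rightarrow> 'v)" where
  "cend_d sc D = (\<lambda>m a. sc (- m) (D m a))"

definition cend_alpha :: "('v \<Rightarrow> 'v) \<Rightarrow> (complex \<Rightarrow> 'v \<Rightarrow> 'v) \<Rightarrow> (complex \<Rightarrow> 'v \<Rightarrow> 'v)" where
  "cend_alpha alpha D = (\<lambda>m a. alpha (D m a))"

definition cend_br :: "complex \<Rightarrow> (complex \<Rightarrow> 'v \<Rightarrow> 'v) \<Rightarrow> (complex \<Rightarrow> 'v \<Rightarrow> 'v) \<Rightarrow> (complex \<Rightarrow> 'v \<Rightarrow> 'v::ab_group_add)" where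
  "cend_br m D H = (\<lambda>t a. D m (H (t - m) a) - H (t - m) (D m a))"

end

theory Submission imports Defs begin

lemma fsum_apply: "(\<Sum>k<(n::nat). (f k :: 'a \<Rightarrow> 'b \<Rightarrow> 'c::ab_group_add)) x y = (\<Sum>k<n. f k x y)"
  by (induction n) auto

lemma addmin: assumes "(\<And>a b. f (a+b) = f a + f b)" shows "f (a - (b::'a::ab_group_add)) = (f a - f b::'b::ab_group_add)"
proof -
  have "f a = f (a - b + b)" by simp
  also have "\<dots> = f (a - b) + f b" by (rule assms)
  finally have "f a - f b = f (a - b) + f b - f b" by (rule arg_cong[where f="\<lambda>x. x - f b"])
  then show ?thesis by simp
qed

lemma addzero: assumes "(\<And>a b. f (a+b) = f a + f b)" shows "f (0::'a::monoid_add) = (0::'b::ab_group_add)"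
proof -
  have "f 0 + f 0 = f 0 + 0" using assms[of 0 0] by simp
  then show ?thesis by (rule add_left_imp_eq)
qed

locale HL =
  fixes sc :: "complex \<Rightarrow> 'r::ab_group_add \<Rightarrow> 'r"
    and d alpha :: "'r \<Rightarrow> 'r"
    and br :: "complex \<Rightarrow> 'r \<Rightarrow> 'r \<Rightarrow> 'r"
  assumes sc_one: "sc 1 a = a"
  and sc_mult: "sc (x*y) a = sc x (sc y a)"
  and sc_addl: "sc (x+y) a = sc x a + sc y a"
  and sc_addr: "sc x (a+b) = sc x a + sc x b"
  and d_add: "d (a+b) = d a + d b"
  and d_sc: "d (sc x a) = sc x (d a)"
  and al_add: "alpha (a+b) = alpha a + alpha b"
  and al_sc: "alpha (sc x a) = sc x (alpha a)"
  and al_d: "alpha (d a) = d (alpha a)"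
  and br_addl: "br l (a+b) c = br l a c + br l b c"
  and br_addr: "br l a (b+c) = br l a b + br l a c"
  and br_scl: "br l (sc x a) b = sc x (br l a b)"
  and br_scr: "br l a (sc x b) = sc x (br l a b)"
  and mult: "alpha (br l a b) = br l (alpha a) (alpha b)"
begin

lemma sc0[simp]: "sc x 0 = 0" by (rule addzero, rule sc_addr)
lemma d0[simp]: "d 0 = 0" by (rule addzero, rule d_add)
lemma al0[simp]: "alpha 0 = 0" by (rule addzero, rule al_add)
lemma brl0[simp]: "br l 0 c = 0" by (rule addzero[of "\<lambda>a. br l a c"], rule br_addl)
lemma brr0[simp]: "br l c 0 = 0" by (rule addzero[of "\<lambda>a. br l c a"], rule br_addr)
lemma br_minl: "br l (a-b) c = br l a c - br l b c" by (rule addmin[of "\<lambda>a. br l a c"], rule br_addl)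
lemma br_minr: "br l c (a-b) = br l c a - br l c b" by (rule addmin[of "\<lambda>a. br l c a"], rule br_addr)
lemma sc_comm: "sc x (sc y a) = sc y (sc x a)"
  by (metis mult.commute sc_mult)
lemma sc_sum: "sc x (\<Sum>j<n. f j) = (\<Sum>j<n. sc x (f j))"
  using sum_comp_morphism[of "sc x" f "{..<n}"] by (simp add: sc_addr o_def)
lemma al_sum: "alpha (\<Sum>j<n. f j) = (\<Sum>j<n. alpha (f j))"
  using sum_comp_morphism[of "alpha" f "{..<n}"] by (simp add: al_add o_def)

lemma alk_comm: "D \<in> Omega sc d alpha \<Longrightarrow> D m ((alpha^^k) a) = (alpha^^k) (D m a)"
  by (induction k) (auto simp: Omega_def)

lemma pad: assumes "n \<le> N"
  shows "(\<Sum>j<n. sc (z^j) (c j)) = (\<Sum>j<N. sc (z^j) (if j<n then c j else 0))"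
proof -
  have "(\<Sum>j<N. sc (z^j) (if j<n then c j else 0)) = (\<Sum>j<n. sc (z^j) (if j<n then c j else 0))"
    by (rule sum.mono_neutral_right) (use assms in auto)
  then show ?thesis by simp
qed

lemma cpoly_add: assumes "is_cpoly_on UNIV sc f" "is_cpoly_on UNIV sc g"
  shows "is_cpoly_on UNIV sc (\<lambda>z. f z + g z)"
proof -
  obtain n1 c1 where 1: "\<forall>z. f z = (\<Sum>j<n1. sc (z ^ j) (c1 j))" using assms(1) by (auto simp: is_cpoly_on_def)
  obtain n2 c2 where 2: "\<forall>z. g z = (\<Sum>j<n2. sc (z ^ j) (c2 j))" using assms(2) by (auto simp: is_cpoly_on_def)
  define N where "N = max n1 n2"
  have "f z + g z = (\<Sum>j<N. sc (z^j) ((if j<n1 then c1 j else 0) + (if j<n2 then c2 j else 0)))" for z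
    using 1 2 pad[of n1 N z c1] pad[of n2 N z c2] by (simp add: N_def sc_addr sum.distrib)
  then show ?thesis unfolding is_cpoly_on_def by (intro exI[of _ N] exI[of _ "\<lambda>j. (if j<n1 then c1 j else 0) + (if j<n2 then c2 j else 0)"]) auto
qed

lemma cpoly_sc: assumes "is_cpoly_on UNIV sc f"
  shows "is_cpoly_on UNIV sc (\<lambda>z. sc x (f z))"
proof -
  obtain n1 c1 where 1: "\<forall>z. f z = (\<Sum>j<n1. sc (z ^ j) (c1 j))" using assms(1) by (auto simp: is_cpoly_on_def)
  have "sc x (f z) = (\<Sum>j<n1. sc (z^j) (sc x (c1 j)))" for z
    using 1 by (simp add: sc_sum sc_comm)
  then show ?thesis unfolding is_cpoly_on_def by (intro exI[of _ n1] exI[of _ "\<lambda>j. sc x (c1 j)"]) auto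
qed

lemma cpoly_al: assumes "is_cpoly_on UNIV sc f"
  shows "is_cpoly_on UNIV sc (\<lambda>z. alpha (f z))"
proof -
  obtain n1 c1 where 1: "\<forall>z. f z = (\<Sum>j<n1. sc (z ^ j) (c1 j))" using assms(1) by (auto simp: is_cpoly_on_def)
  have "alpha (f z) = (\<Sum>j<n1. sc (z^j) (alpha (c1 j)))" for z
    using 1 by (simp add: al_sum al_sc)
  then show ?thesis unfolding is_cpoly_on_def by (intro exI[of _ n1] exI[of _ "\<lambda>j. alpha (c1 j)"]) auto
qed

lemma cpoly_d: assumes "is_cpoly_on UNIV sc f"
  shows "is_cpoly_on UNIV sc (\<lambda>z. sc (-z) (f z))"
proof -
  obtain n1 c1 where 1: "\<forall>z. f z = (\<Sum>j<n1. sc (z ^ j) (c1 j))" using assms(1) by (auto simp: is_cpoly_on_def)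
  have "sc (-z) (f z) = (\<Sum>j<Suc n1. sc (z^j) (if j = 0 then 0 else sc (-1) (c1 (j-1))))" for z
  proof -
    have "sc (-z) (f z) = (\<Sum>j<n1. sc (z^Suc j) (sc (-1) (c1 j)))"
      using 1 by (simp add: sc_sum flip: sc_mult)
    then show ?thesis by (subst sum.lessThan_Suc_shift) simp
  qed
  then show ?thesis unfolding is_cpoly_on_def by (intro exI[of _ "Suc n1"] exI[of _ "\<lambda>j. if j = 0 then 0 else sc (-1) (c1 (j-1))"]) auto
qed


lemma QCk_zero: "0 \<in> QCk sc d alpha br k"
  unfolding QCk_def Omega_def Cend_def is_cpoly_on_def by (auto intro: exI[of _ 0])

lemma QCk_add: assumes "D \<in> QCk sc d alpha br k" "H \<in> QCk sc d alpha br k"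
  shows "D + H \<in> QCk sc d alpha br k"
proof -
  have c: "is_cpoly_on UNIV sc (\<lambda>m. (D+H) m a)" for a
    using cpoly_add[of "\<lambda>m. D m a" "\<lambda>m. H m a"] assms by (auto simp: QCk_def Omega_def Cend_def)
  show ?thesis using assms c unfolding QCk_def Omega_def Cend_def
    by (auto simp: sc_addr d_add al_add br_addl br_addr algebra_simps)
qed

lemma QCk_sc: assumes "D \<in> QCk sc d alpha br k"
  shows "cend_sc sc x D \<in> QCk sc d alpha br k"
proof -
  have c: "is_cpoly_on UNIV sc (\<lambda>m. cend_sc sc x D m a)" for a
    using cpoly_sc[of "\<lambda>m. D m a"] assms by (auto simp: QCk_def Omega_def Cend_def cend_sc_def)
  show ?thesis using assms c unfolding QCk_def Omega_def Cend_def cend_sc_def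
    by (auto simp: sc_addr d_sc al_sc br_scl br_scr sc_comm)
qed

lemma QCk_d: assumes "D \<in> QCk sc d alpha br k"
  shows "cend_d sc D \<in> QCk sc d alpha br k"
proof -
  have c: "is_cpoly_on UNIV sc (\<lambda>m. cend_d sc D m a)" for a
    using cpoly_d[of "\<lambda>m. D m a"] assms by (auto simp: QCk_def Omega_def Cend_def cend_d_def)
  show ?thesis using assms c unfolding QCk_def Omega_def Cend_def cend_d_def
    by (auto simp: sc_addr d_sc al_sc br_scl br_scr sc_comm)
qed

lemma QCk_al: assumes "D \<in> QCk sc d alpha br k"
  shows "cend_alpha alpha D \<in> QCk sc d alpha br (Suc k)"
proof -
  have c: "is_cpoly_on UNIV sc (\<lambda>m. cend_alpha alpha D m a)" for a
    using cpoly_al[of "\<lambda>m. D m a"] assms by (auto simp: QCk_def Omega_def Cend_def cend_alpha_def)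
  have q: "br (l + m) (D m a) ((alpha ^^ k) b) = br l ((alpha ^^ k) a) (D m b)" for a b l m
    using assms by (auto simp: QCk_def)
  have "br (l + m) (alpha (D m a)) ((alpha ^^ Suc k) b) = br l ((alpha ^^ Suc k) a) (alpha (D m b))" for a b l m
    by (simp add: q flip: mult)
  then show ?thesis using assms c unfolding QCk_def Omega_def Cend_def cend_alpha_def
    by (auto simp: al_add al_sc al_d)
qed

lemma QCk_additive: "D \<in> QCk sc d alpha br k \<Longrightarrow> D m (a + b) = D m a + D m b"
  by (auto simp: QCk_def Omega_def Cend_def)

lemma QC_additive: "P \<in> QC sc d alpha br \<Longrightarrow> P m (a + b) = P m a + P m b"
proof -
  assume "P \<in> QC sc d alpha br"
  then obtain n1 f where 1: "P = (\<Sum>k<n1. f k)" "\<forall>k<n1. f k \<in> QCk sc d alpha br k" by (auto simp: QC_def)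
  have "(\<Sum>k<n1. f k m (a+b)) = (\<Sum>k<n1. f k m a + f k m b)"
    by (rule sum.cong) (use 1 QCk_additive in auto)
  then show ?thesis using 1 by (simp add: fsum_apply sum.distrib)
qed

lemma QC_I: "(\<And>k. k < n \<Longrightarrow> f k \<in> QCk sc d alpha br k) \<Longrightarrow> (\<Sum>k<n. f k) \<in> QC sc d alpha br"
  unfolding QC_def by blast

lemma QC_zero: "0 \<in> QC sc d alpha br"
  using QC_I[of 0] by simp

lemma QC_add: assumes "P \<in> QC sc d alpha br" "Q \<in> QC sc d alpha br"
  shows "P + Q \<in> QC sc d alpha br"
proof -
  obtain n1 f where 1: "P = (\<Sum>k<n1. f k)" "\<forall>k<n1. f k \<in> QCk sc d alpha br k" using assms(1) by (auto simp: QC_def)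
  obtain n2 g where 2: "Q = (\<Sum>k<n2. g k)" "\<forall>k<n2. g k \<in> QCk sc d alpha br k" using assms(2) by (auto simp: QC_def)
  define N where "N = max n1 n2"
  have pd: "(\<Sum>k<n. h k) = (\<Sum>k<N. if k < n then h k else 0)" if "n \<le> N" for n and h :: "nat \<Rightarrow> complex \<Rightarrow> 'r \<Rightarrow> 'r"
  proof -
    have "(\<Sum>k<N. if k < n then h k else 0) = (\<Sum>k<n. if k < n then h k else 0)"
      by (rule sum.mono_neutral_right) (use that in auto)
    then show ?thesis by simp
  qed
  have "P + Q = (\<Sum>k<N. (if k < n1 then f k else 0) + (if k < n2 then g k else 0))"
    using 1 2 pd[of n1 f] pd[of n2 g] by (simp add: N_def sum.distrib)
  moreover have "(\<Sum>k<N. (if k < n1 then f k else 0) + (if k < n2 then g k else 0)) \<in> QC sc d alpha br"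
    by (rule QC_I) (use 1 2 QCk_add QCk_zero in auto)
  ultimately show ?thesis by simp
qed

lemma QC_sc: assumes "P \<in> QC sc d alpha br" shows "cend_sc sc x P \<in> QC sc d alpha br"
proof -
  obtain n1 f where 1: "P = (\<Sum>k<n1. f k)" "\<forall>k<n1. f k \<in> QCk sc d alpha br k" using assms(1) by (auto simp: QC_def)
  have "cend_sc sc x P = (\<Sum>k<n1. cend_sc sc x (f k))"
    using 1 by (auto simp: fun_eq_iff cend_sc_def fsum_apply sc_sum)
  then show ?thesis using 1 QC_I[of n1 "\<lambda>k. cend_sc sc x (f k)"] QCk_sc by auto
qed

lemma QC_d: assumes "P \<in> QC sc d alpha br" shows "cend_d sc P \<in> QC sc d alpha br"
proof -
  obtain n1 f where 1: "P = (\<Sum>k<n1. f k)" "\<forall>k<n1. f k \<in> QCk sc d alpha br k" using assms(1) by (auto simp: QC_def)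
  have "cend_d sc P = (\<Sum>k<n1. cend_d sc (f k))"
    using 1 by (auto simp: fun_eq_iff cend_d_def fsum_apply sc_sum)
  then show ?thesis using 1 QC_I[of n1 "\<lambda>k. cend_d sc (f k)"] QCk_d by auto
qed

lemma QC_al: assumes "P \<in> QC sc d alpha br" shows "cend_alpha alpha P \<in> QC sc d alpha br"
proof -
  obtain n1 f where 1: "P = (\<Sum>k<n1. f k)" "\<forall>k<n1. f k \<in> QCk sc d alpha br k" using assms(1) by (auto simp: QC_def)
  define g where "g k = (if k = 0 then 0 else cend_alpha alpha (f (k - 1)))" for k
  have "cend_alpha alpha P = (\<Sum>k<n1. cend_alpha alpha (f k))"
    using 1 by (auto simp: fun_eq_iff cend_alpha_def fsum_apply al_sum)
  also have "\<dots> = (\<Sum>k<Suc n1. g k)"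
    by (subst sum.lessThan_Suc_shift) (simp add: g_def)
  finally have e: "cend_alpha alpha P = (\<Sum>k<Suc n1. g k)" .
  have "g k \<in> QCk sc d alpha br k" if "k < Suc n1" for k
  proof (cases k)
    case 0 then show ?thesis by (simp add: g_def QCk_zero)
  next
    case (Suc j) then show ?thesis using that 1 QCk_al[of "f j" j] by (simp add: g_def)
  qed
  then show ?thesis unfolding e by (rule QC_I)
qed

lemma cbr_addl: "(\<And>t a b. Q t (a+b) = Q t a + Q t b) \<Longrightarrow> cend_br m (D1 + D2) Q = cend_br m D1 Q + cend_br m D2 Q"
  by (auto simp: fun_eq_iff cend_br_def)
lemma cbr_addr: "(\<And>a b. D m (a+b) = D m a + D m b) \<Longrightarrow> cend_br m D (H1 + H2) = cend_br m D H1 + cend_br m D H2"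
  by (auto simp: fun_eq_iff cend_br_def)
lemma cbr_0l: "(\<And>t a b. Q t (a+b) = Q t a + Q t b) \<Longrightarrow> cend_br m 0 Q = 0"
  by (auto simp: fun_eq_iff cend_br_def intro: addzero)
lemma cbr_0r: "(\<And>a b. D m (a+b) = D m a + D m b) \<Longrightarrow> cend_br m D 0 = 0"
  by (auto simp: fun_eq_iff cend_br_def intro: addzero)

lemma QC_br0:
  assumes Z: "\<forall>k s D H m. D \<in> QCk sc d alpha br k \<longrightarrow> H \<in> QCk sc d alpha br s \<longrightarrow> cend_br m D H = 0"
    and P: "P \<in> QC sc d alpha br" and Q: "Q \<in> QC sc d alpha br"
  shows "cend_br m P Q = 0"
proof -
  obtain n1 f where 1: "P = (\<Sum>k<n1. f k)" "\<forall>k<n1. f k \<in> QCk sc d alpha br k" using P by (auto simp: QC_def)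
  obtain n2 g where 2: "Q = (\<Sum>k<n2. g k)" "\<forall>k<n2. g k \<in> QCk sc d alpha br k" using Q by (auto simp: QC_def)
  have inner: "cend_br m D (\<Sum>k<n. g k) = 0" if "D \<in> QCk sc d alpha br j" "n \<le> n2" for D j n
    using that(2)
  proof (induction n)
    case 0
    have "cend_br m D 0 = 0" by (rule cbr_0r, rule QCk_additive[OF that(1)])
    then show ?case by (simp only: lessThan_0 sum.empty)
  next
    case (Suc n)
    have e: "cend_br m D (\<Sum>k<Suc n. g k) = cend_br m D (\<Sum>k<n. g k) + cend_br m D (g n)"
      unfolding sum.lessThan_Suc by (rule cbr_addr, rule QCk_additive[OF that(1)])
    have a: "cend_br m D (\<Sum>k<n. g k) = 0" by (rule Suc.IH) (use Suc.prems in simp)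
    have gn: "g n \<in> QCk sc d alpha br n" using 2(2) Suc.prems by simp
    have b: "cend_br m D (g n) = 0" using Z that(1) gn by blast
    show ?case by (simp only: e a b add_0_right)
  qed
  have "cend_br m (\<Sum>k<n. f k) Q = 0" if "n \<le> n1" for n
    using that
  proof (induction n)
    case 0
    have "cend_br m 0 Q = 0" by (rule cbr_0l, rule QC_additive[OF Q])
    then show ?case by (simp only: lessThan_0 sum.empty)
  next
    case (Suc n)
    have e: "cend_br m (\<Sum>k<Suc n. f k) Q = cend_br m (\<Sum>k<n. f k) Q + cend_br m (f n) Q"
      unfolding sum.lessThan_Suc by (rule cbr_addl, rule QC_additive[OF Q])
    have a: "cend_br m (\<Sum>k<n. f k) Q = 0" by (rule Suc.IH) (use Suc.prems in simp)
    have b: "cend_br m (f n) Q = 0" unfolding 2(1) by (rule inner[of _ n]) (use 1(2) Suc.prems in auto)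
    show ?case by (simp only: e a b add_0_right)
  qed
  then show ?thesis using 1 by simp
qed

lemma half: assumes "(x::'r) = - x" shows "x = 0"
proof -
  have "x + x = 0" using assms by (metis add.right_inverse)
  then have "sc 2 x = 0" using sc_addl[of 1 1 x] by (simp add: sc_one)
  then have "sc (1/2) (sc 2 x) = 0" by simp
  then show ?thesis by (simp flip: sc_mult add: sc_one)
qed

lemma key:
  assumes S: "surj alpha" and C: "center br = {0}"
    and D: "D \<in> QCk sc d alpha br k" and H: "H \<in> QCk sc d alpha br s"
    and E: "cend_br m D H \<in> QCk sc d alpha br (k + s)"
  shows "cend_br m D H = 0"
proof (rule ext, rule ext)
  fix t a
  define n where "n = t - m"
  define X where "X = cend_br m D H"
  have DO: "D \<in> Omega sc d alpha" and HO: "H \<in> Omega sc d alpha" using D H by (auto simp: QCk_def)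
  have Dq: "br (l + m') (D m' a) ((alpha ^^ k) b) = br l ((alpha ^^ k) a) (D m' b)" for a b l m'
    using D by (auto simp: QCk_def)
  have Hq: "br (l + m') (H m' a) ((alpha ^^ s) b) = br l ((alpha ^^ s) a) (H m' b)" for a b l m'
    using H by (auto simp: QCk_def)
  have Eq: "br (l + m') (X m' a) ((alpha ^^ (k+s)) b) = br l ((alpha ^^ (k+s)) a) (X m' b)" for a b l m'
    using E by (auto simp: QCk_def X_def)
  have ks: "(alpha ^^ (k+s)) y = (alpha ^^ k) ((alpha ^^ s) y)" for y by (simp add: funpow_add)
  have sk: "(alpha ^^ (k+s)) y = (alpha ^^ s) ((alpha ^^ k) y)" for y by (simp add: add.commute[of k s] funpow_add)
  have h1: "br (l + t) (D m (H n a')) ((alpha ^^ (k+s)) b) = br l ((alpha ^^ (k+s)) a') (H n (D m b))" for l a' b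
  proof -
    have "br (l + t) (D m (H n a')) ((alpha ^^ (k+s)) b) = br ((l + n) + m) (D m (H n a')) ((alpha ^^ k) ((alpha ^^ s) b))"
      by (simp add: ks n_def)
    also have "\<dots> = br (l + n) ((alpha ^^ k) (H n a')) (D m ((alpha ^^ s) b))" by (rule Dq)
    also have "\<dots> = br (l + n) (H n ((alpha ^^ k) a')) ((alpha ^^ s) (D m b))" by (simp add: alk_comm[OF DO] alk_comm[OF HO])
    also have "\<dots> = br l ((alpha ^^ s) ((alpha ^^ k) a')) (H n (D m b))" by (rule Hq)
    finally show ?thesis by (simp add: sk)
  qed
  have h2: "br (l + t) (H n (D m a')) ((alpha ^^ (k+s)) b) = br l ((alpha ^^ (k+s)) a') (D m (H n b))" for l a' b
  proof -
    have "br (l + t) (H n (D m a')) ((alpha ^^ (k+s)) b) = br ((l + m) + n) (H n (D m a')) ((alpha ^^ s) ((alpha ^^ k) b))"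
      by (simp add: sk n_def)
    also have "\<dots> = br (l + m) ((alpha ^^ s) (D m a')) (H n ((alpha ^^ k) b))" by (rule Hq)
    also have "\<dots> = br (l + m) (D m ((alpha ^^ s) a')) ((alpha ^^ k) (H n b))" by (simp add: alk_comm[OF DO] alk_comm[OF HO])
    also have "\<dots> = br l ((alpha ^^ k) ((alpha ^^ s) a')) (D m (H n b))" by (rule Dq)
    finally show ?thesis by (simp add: ks)
  qed
  have Xt: "X t y = D m (H n y) - H n (D m y)" for y by (simp add: X_def cend_br_def n_def)
  have neg: "br (l + t) (X t a') ((alpha ^^ (k+s)) b) = - br l ((alpha ^^ (k+s)) a') (X t b)" for l a' b
    by (simp add: Xt br_minl br_minr h1 h2)
  have z: "br l ((alpha ^^ (k+s)) a') (X t b) = 0" for l a' b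
    using neg[of l a' b] Eq[of l t a' b] half by metis
  have "br mu (X t a) c = 0" for mu c
  proof -
    obtain b where b: "c = (alpha ^^ (k+s)) b" using surj_fn[OF S, of "k+s"] by (metis surjD)
    have "br ((mu - t) + t) (X t a) c = 0" using Eq[of "mu - t" t a b] z b by simp
    then show ?thesis by simp
  qed
  then have "X t a \<in> center br" by (auto simp: center_def)
  then show "cend_br m D H t a = 0 t a" using C by (simp add: X_def)
qed

end

theorem mainTheorem13:
  fixes sc :: "complex \<Rightarrow> 'r::ab_group_add \<Rightarrow> 'r"
    and d alpha :: "'r \<Rightarrow> 'r"
    and br :: "complex \<Rightarrow> 'r \<Rightarrow> 'r \<Rightarrow> 'r"
  assumes "hom_lie_conf_on UNIV sc d alpha br"
    and "multiplicative alpha br"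
    and "surj alpha"
    and "center br = {0}"
  shows "(hom_lie_conf_on (QC sc d alpha br) (cend_sc sc) (cend_d sc) (cend_alpha alpha) cend_br
          \<and> (\<forall>k s D H m. D \<in> QCk sc d alpha br k \<longrightarrow> H \<in> QCk sc d alpha br s \<longrightarrow>
                 cend_br m D H \<in> QCk sc d alpha br (k + s)))
     \<longleftrightarrow> (\<forall>k s D H m. D \<in> QCk sc d alpha br k \<longrightarrow> H \<in> QCk sc d alpha br s \<longrightarrow>
                 cend_br m D H = 0)"
proof -
  interpret HL sc d alpha br
  proof unfold_locales
    note h = assms(1)[unfolded hom_lie_conf_on_def, THEN conjunct2, THEN conjunct2, THEN conjunct2,
        THEN conjunct2, THEN conjunct2, THEN conjunct2]
    note m = assms(2)[unfolded multiplicative_def]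
    show "sc 1 a = a" for a using h[THEN conjunct1] by simp
    show "sc (x*y) a = sc x (sc y a)" for x y a using h[THEN conjunct2, THEN conjunct1] by simp
    show "sc (x+y) a = sc x a + sc y a" for x y a using h[THEN conjunct2, THEN conjunct2, THEN conjunct1] by simp
    show "sc x (a+b) = sc x a + sc x b" for x a b using h[THEN conjunct2, THEN conjunct2, THEN conjunct2, THEN conjunct1] by simp
    show "d (a+b) = d a + d b" for a b using h[THEN conjunct2, THEN conjunct2, THEN conjunct2, THEN conjunct2, THEN conjunct1] by simp
    show "d (sc x a) = sc x (d a)" for x a using h[THEN conjunct2, THEN conjunct2, THEN conjunct2, THEN conjunct2, THEN conjunct2, THEN conjunct1] by simp
    show "alpha (a+b) = alpha a + alpha b" for a b using h[THEN conjunct2, THEN conjunct2, THEN conjunct2, THEN conjunct2, THEN conjunct2, THEN conjunct2, THEN conjunct1] by simp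
    show "alpha (sc x a) = sc x (alpha a)" for x a using h[THEN conjunct2, THEN conjunct2, THEN conjunct2, THEN conjunct2, THEN conjunct2, THEN conjunct2, THEN conjunct2, THEN conjunct1] by simp
    show "alpha (d a) = d (alpha a)" for a using h[THEN conjunct2, THEN conjunct2, THEN conjunct2, THEN conjunct2, THEN conjunct2, THEN conjunct2, THEN conjunct2, THEN conjunct2, THEN conjunct1] by simp
    show "br l (a+b) c = br l a c + br l b c" for l a b c using h[THEN conjunct2, THEN conjunct2, THEN conjunct2, THEN conjunct2, THEN conjunct2, THEN conjunct2, THEN conjunct2, THEN conjunct2, THEN conjunct2, THEN conjunct1] by simp
    show "br l a (b+c) = br l a b + br l a c" for l a b c using h[THEN conjunct2, THEN conjunct2, THEN conjunct2, THEN conjunct2, THEN conjunct2, THEN conjunct2, THEN conjunct2, THEN conjunct2, THEN conjunct2, THEN conjunct2, THEN conjunct1] by simp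
    show "br l (sc x a) b = sc x (br l a b)" for l x a b using h[THEN conjunct2, THEN conjunct2, THEN conjunct2, THEN conjunct2, THEN conjunct2, THEN conjunct2, THEN conjunct2, THEN conjunct2, THEN conjunct2, THEN conjunct2, THEN conjunct2, THEN conjunct1] by simp
    show "br l a (sc x b) = sc x (br l a b)" for l x a b using h[THEN conjunct2, THEN conjunct2, THEN conjunct2, THEN conjunct2, THEN conjunct2, THEN conjunct2, THEN conjunct2, THEN conjunct2, THEN conjunct2, THEN conjunct2, THEN conjunct2, THEN conjunct2, THEN conjunct1] by simp
    show "alpha (br l a b) = br l (alpha a) (alpha b)" for l a b using m by blast
  qed
  show ?thesis
  proof
    assume "hom_lie_conf_on (QC sc d alpha br) (cend_sc sc) (cend_d sc) (cend_alpha alpha) cend_br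
          \<and> (\<forall>k s D H m. D \<in> QCk sc d alpha br k \<longrightarrow> H \<in> QCk sc d alpha br s \<longrightarrow>
                 cend_br m D H \<in> QCk sc d alpha br (k + s))"
    then show "\<forall>k s D H m. D \<in> QCk sc d alpha br k \<longrightarrow> H \<in> QCk sc d alpha br s \<longrightarrow> cend_br m D H = 0"
      using key[OF assms(3,4)] by blast
  next
    assume Z: "\<forall>k s D H m. D \<in> QCk sc d alpha br k \<longrightarrow> H \<in> QCk sc d alpha br s \<longrightarrow> cend_br m D H = 0"
    have B: "P \<in> QC sc d alpha br \<Longrightarrow> Q \<in> QC sc d alpha br \<Longrightarrow> cend_br m P Q = 0" for m P Q
      by (rule QC_br0[OF Z])
    have s0: "cend_sc sc x 0 = 0" for x by (simp add: cend_sc_def fun_eq_iff)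
    have d0: "cend_d sc 0 = 0" by (simp add: cend_d_def fun_eq_iff)
    have skew: "\<exists>n c. (\<forall>j<n. c j \<in> QC sc d alpha br) \<and>
        (\<forall>l. cend_br l Q P = (\<Sum>j<n. cend_sc sc (l ^ j) (c j))) \<and>
        (\<forall>l. cend_br l P Q = - subst_minus_d (cend_sc sc) (cend_d sc) n c l)"
      if "P \<in> QC sc d alpha br" "Q \<in> QC sc d alpha br" for P Q
      by (rule exI[of _ 0]) (simp add: B that subst_minus_d_def)
    have cp: "is_cpoly_on (QC sc d alpha br) (cend_sc sc) (\<lambda>l. cend_br l P Q)"
      if "P \<in> QC sc d alpha br" "Q \<in> QC sc d alpha br" for P Q
      unfolding is_cpoly_on_def by (rule exI[of _ 0]) (simp add: B that)
    have "hom_lie_conf_on (QC sc d alpha br) (cend_sc sc) (cend_d sc) (cend_alpha alpha) cend_br"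
      unfolding hom_lie_conf_on_def
      apply (intro conjI)
      subgoal by (rule QC_zero)
      subgoal by (simp add: QC_add)
      subgoal by (simp add: QC_sc)
      subgoal by (simp add: QC_d)
      subgoal by (simp add: QC_al)
      subgoal by (simp add: B QC_zero)
      subgoal by (simp add: fun_eq_iff cend_sc_def sc_one)
      subgoal by (simp add: fun_eq_iff cend_sc_def sc_mult)
      subgoal by (simp add: fun_eq_iff cend_sc_def sc_addl)
      subgoal by (simp add: fun_eq_iff cend_sc_def sc_addr)
      subgoal by (simp add: fun_eq_iff cend_d_def sc_addr)
      subgoal by (simp add: fun_eq_iff cend_d_def cend_sc_def sc_comm)
      subgoal by (simp add: fun_eq_iff cend_alpha_def al_add)
      subgoal by (simp add: fun_eq_iff cend_alpha_def cend_sc_def al_sc)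
      subgoal by (simp add: fun_eq_iff cend_alpha_def cend_d_def al_sc)
      subgoal by (simp add: B QC_add)
      subgoal by (simp add: B QC_add)
      subgoal by (simp add: B QC_sc s0)
      subgoal by (simp add: B QC_sc s0)
      subgoal by (simp add: cp)
      subgoal by (simp add: B QC_d s0)
      subgoal by (simp add: B QC_d s0 d0)
      subgoal by (simp add: skew)
      subgoal by (simp add: B QC_al QC_zero)
      done
    then show "hom_lie_conf_on (QC sc d alpha br) (cend_sc sc) (cend_d sc) (cend_alpha alpha) cend_br
          \<and> (\<forall>k s D H m. D \<in> QCk sc d alpha br k \<longrightarrow> H \<in> QCk sc d alpha br s \<longrightarrow>
                 cend_br m D H \<in> QCk sc d alpha br (k + s))"
      using Z QCk_zero by auto
  qed
qed

end
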